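(* Let $\mathbb{K}$ be an algebraically closed field of characteristic $p$, with $p=0$ or $p>n$. If $(\Gamma_1,\Gamma_2,\Gamma_3)$ and $(\Sigma_1,\Sigma_2,\Sigma_3)$ are triangular dual $3$-nets of order $n$ in $PG(2,\mathbb{K})$ with $\Gamma_1=\Sigma_1$, then their associated triangles share the two vertices lying on their common side (the line containing $\Gamma_1=\Sigma_1$).
   Context: A dual $3$-net of order $n$ in $PG(2,\mathbb{K})$ is a triple of pairwise disjoint point sets, each of size $n$, such that every line meeting two distinct components meets each component in exactly one point. A dual $3$-net of order $n\ge4$ is triangular if its three components lie respectively on the three sides of a triangle; this (uniquely determined) triangle is called its associated triangle. *)

theory Defs
  imports "HOL-Computational_Algebra.Polynomial"
begin

type_synonym 'a vec3 = "'a \<times> 'a \<times> 'a"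

definition zero3 :: "'a::field vec3" where
  "zero3 = (0, 0, 0)"

definition smult3 :: "'a::field \<Rightarrow> 'a vec3 \<Rightarrow> 'a vec3" where
  "smult3 c v = (case v of (x, y, z) \<Rightarrow> (c * x, c * y, c * z))"

definition dot3 :: "'a::field vec3 \<Rightarrow> 'a vec3 \<Rightarrow> 'a" where
  "dot3 u v = (case u of (a, b, c) \<Rightarrow> case v of (x, y, z) \<Rightarrow> a * x + b * y + c * z)"

definition ppoint :: "'a::field vec3 \<Rightarrow> 'a vec3 set" where
  "ppoint v = {smult3 c v | c. c \<noteq> 0}"

definition PG2_points :: "'a::field vec3 set set" where
  "PG2_points = {ppoint v | v. v \<noteq> zero3}"

definition pline :: "'a::field vec3 \<Rightarrow> 'a vec3 set set" where
  "pline w = {ppoint v | v. v \<noteq> zero3 \<and> dot3 w v = 0}"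

definition PG2_lines :: "'a::field vec3 set set set" where
  "PG2_lines = {pline w | w. w \<noteq> zero3}"

definition dual_3net ::
  "'a::field vec3 set set \<Rightarrow> 'a vec3 set set \<Rightarrow> 'a vec3 set set \<Rightarrow> nat \<Rightarrow> bool" where
  "dual_3net G1 G2 G3 n \<longleftrightarrow>
     (let G = (\<lambda>i::nat. if i = 1 then G1 else if i = 2 then G2 else G3) in
       (\<forall>i\<in>{1,2,3}. G i \<subseteq> PG2_points \<and> finite (G i) \<and> card (G i) = n) \<and>
       (\<forall>i\<in>{1,2,3}. \<forall>j\<in>{1,2,3}. i \<noteq> j \<longrightarrow> G i \<inter> G j = {}) \<and>
       (\<forall>l\<in>PG2_lines. \<forall>i\<in>{1,2,3}. \<forall>j\<in>{1,2,3}.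
           i \<noteq> j \<and> l \<inter> G i \<noteq> {} \<and> l \<inter> G j \<noteq> {} \<longrightarrow>
           (\<forall>k\<in>{1,2,3}. card (l \<inter> G k) = 1)))"

definition triangle ::
  "'a::field vec3 set set \<Rightarrow> 'a vec3 set set \<Rightarrow> 'a vec3 set set \<Rightarrow> bool" where
  "triangle l1 l2 l3 \<longleftrightarrow> l1 \<in> PG2_lines \<and> l2 \<in> PG2_lines \<and> l3 \<in> PG2_lines \<and>
     l1 \<noteq> l2 \<and> l1 \<noteq> l3 \<and> l2 \<noteq> l3 \<and> l1 \<inter> l2 \<inter> l3 = {}"

definition triangle_of ::
  "'a::field vec3 set set \<Rightarrow> 'a vec3 set set \<Rightarrow> 'a vec3 set set \<Rightarrow>
   'a vec3 set set \<Rightarrow> 'a vec3 set set \<Rightarrow> 'a vec3 set set \<Rightarrow> bool" where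
  "triangle_of G1 G2 G3 l1 l2 l3 \<longleftrightarrow>
     triangle l1 l2 l3 \<and> G1 \<subseteq> l1 \<and> G2 \<subseteq> l2 \<and> G3 \<subseteq> l3"

definition triangular_dual_3net ::
  "'a::field vec3 set set \<Rightarrow> 'a vec3 set set \<Rightarrow> 'a vec3 set set \<Rightarrow> nat \<Rightarrow> bool" where
  "triangular_dual_3net G1 G2 G3 n \<longleftrightarrow>
     dual_3net G1 G2 G3 n \<and> n \<ge> 4 \<and> (\<exists>l1 l2 l3. triangle_of G1 G2 G3 l1 l2 l3)"

definition vertex :: "'a::field vec3 set set \<Rightarrow> 'a vec3 set set \<Rightarrow> 'a vec3 set" where
  "vertex l m = (THE P. P \<in> l \<inter> m)"

end

theory Submission
  imports Defs
begin

lemma poly_key: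
  fixes \<alpha> \<beta> \<gamma> \<delta> c c' :: "'a::field"
  assumes fin: "finite T'" and cardT: "card T' = n" and n3: "n \<ge> 3"
    and ch: "\<And>m. 1 \<le> m \<Longrightarrow> m \<le> n \<Longrightarrow> of_nat m \<noteq> (0::'a)"
    and rt: "\<forall>t\<in>T'. t^n = c'"
    and eq: "\<forall>t\<in>T'. (\<beta> + t*\<delta>)^n = c*(\<alpha> + t*\<gamma>)^n"
    and c0: "c \<noteq> 0" and det: "\<alpha>*\<delta> - \<beta>*\<gamma> \<noteq> 0"
  shows "(\<beta> = 0 \<and> \<gamma> = 0) \<or> (\<alpha> = 0 \<and> \<delta> = 0)"
proof -
  define p where "p = [:\<beta>,\<delta>:]^n - smult c ([:\<alpha>,\<gamma>:]^n)"
  define q :: "'a poly" where "q = monom 1 n - [:c':]"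
  define k where "k = coeff p n"
  define r where "r = p - smult k q"
  have pp: "poly p t = (\<beta> + t*\<delta>)^n - c*(\<alpha>+t*\<gamma>)^n" for t
    by (simp add: p_def poly_monom algebra_simps)
  have pq: "poly q t = t^n - c'" for t
    by (simp add: q_def poly_monom)
  have roots: "T' \<subseteq> {x. poly r x = 0}"
    using rt eq by (auto simp: r_def pp pq)
  have dp: "degree p \<le> n"
    unfolding p_def
    by (rule degree_diff_le) (auto intro: order.trans[OF degree_power_le] order.trans[OF degree_smult_le])
  have dq: "degree q \<le> n"
    unfolding q_def by (rule degree_diff_le) (auto simp: degree_monom_le)
  have dr: "degree r \<le> n"
    unfolding r_def using dp dq
    by (meson degree_diff_le degree_smult_le order.trans)
  have cr: "coeff r n = 0"
    using n3 by (cases n) (simp_all add: r_def k_def q_def)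
  have "r = 0"
  proof (rule ccontr)
    assume "r \<noteq> 0"
    then have "degree r \<noteq> n" using cr n3
      by (metis leading_coeff_0_iff)
    with dr have "degree r < n" by simp
    moreover have "card T' \<le> card {x. poly r x = 0}"
      using roots poly_roots_finite[OF \<open>r \<noteq> 0\<close>] by (rule card_mono[rotated])
    moreover have "card {x. poly r x = 0} \<le> degree r"
      using card_poly_roots_bound[OF \<open>r \<noteq> 0\<close>] .
    ultimately show False using cardT by simp
  qed
  then have cp: "coeff p j = k * coeff q j" for j
    by (metis r_def coeff_diff coeff_smult eq_iff_diff_eq_0 coeff_0)
  obtain m where nm: "n = m + 2" using n3 by (intro that[of "n-2"]) simp
  have m1: "m \<ge> 1" using n3 nm by simp
  have q1: "coeff q (n-1) = 0" "coeff q (n-2) = 0"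
    using m1 by (cases m; simp add: q_def coeff_monom nm)+
  have e1: "of_nat n * (\<delta>^(m+1)*\<beta> - c*(\<gamma>^(m+1)*\<alpha>)) = 0"
  proof -
    have z: "coeff p (n-1) = 0" using cp q1 by simp
    have "coeff p (n-1) = of_nat (n choose (n-1)) * \<delta>^(n-1) * \<beta>^(n-(n-1)) - c * (of_nat (n choose (n-1)) * \<gamma>^(n-1) * \<alpha>^(n-(n-1)))"
      by (simp add: p_def coeff_linear_poly_power)
    moreover have "n - 1 = m+1" "n - (n-1) = 1" using nm by auto
    moreover have "n choose (n-1) = n" using binomial_symmetric[of 1 n] nm by simp
    ultimately show ?thesis using z by (simp add: algebra_simps) (metis)
  qed
  have ch2: "of_nat (n choose 2) \<noteq> (0::'a)"
  proof
    assume h: "of_nat (n choose 2) = (0::'a)"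
    have "2 * (n choose 2) = n * (n - 1)"
    proof -
      have "even (n*(n-1))" by (cases n) auto
      then show ?thesis by (simp add: choose_two)
    qed
    then have "(of_nat (n * (n-1)) :: 'a) = 0"
      by (metis h mult_zero_right of_nat_mult)
    then have "(of_nat n :: 'a) * of_nat (n-1) = 0" by (simp only: of_nat_mult)
    moreover have "(of_nat n :: 'a) \<noteq> 0" "(of_nat (n-1) :: 'a) \<noteq> 0"
      using ch[of n] ch[of "n-1"] n3 by auto
    ultimately show False by simp
  qed
  have e2: "of_nat (n choose 2) * (\<delta>^m*\<beta>^2 - c*(\<gamma>^m*\<alpha>^2)) = 0"
  proof -
    have z: "coeff p (n-2) = 0" using cp q1 by simp
    have "coeff p (n-2) = of_nat (n choose (n-2)) * \<delta>^(n-2) * \<beta>^(n-(n-2)) - c * (of_nat (n choose (n-2)) * \<gamma>^(n-2) * \<alpha>^(n-(n-2)))"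
      by (simp add: p_def coeff_linear_poly_power)
    moreover have "n - 2 = m" "n - (n-2) = 2" using nm by auto
    moreover have "n choose (n-2) = n choose 2" using binomial_symmetric[of 2 n] nm by simp
    ultimately show ?thesis using z by (simp add: algebra_simps) (metis)
  qed
  have E1: "\<delta>^(m+1)*\<beta> = c*(\<gamma>^(m+1)*\<alpha>)" using e1 ch[of n] n3 by simp
  have E2: "\<delta>^m*\<beta>^2 = c*(\<gamma>^m*\<alpha>^2)" using e2 ch2 by simp
  have "c*\<alpha>*\<gamma>^m*(\<beta>*\<gamma> - \<alpha>*\<delta>) = 0"
  proof -
    have "\<beta> * (\<delta>^(m+1)*\<beta>) = \<delta> * (\<delta>^m*\<beta>^2)" by (simp add: power2_eq_square algebra_simps)
    then have "\<beta> * (c*(\<gamma>^(m+1)*\<alpha>)) = \<delta> * (c*(\<gamma>^m*\<alpha>^2))" using E1 E2 by metis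
    moreover have "c*\<alpha>*\<gamma>^m*(\<beta>*\<gamma> - \<alpha>*\<delta>) = \<beta> * (c*(\<gamma>^(m+1)*\<alpha>)) - \<delta> * (c*(\<gamma>^m*\<alpha>^2))"
      by (simp add: power2_eq_square algebra_simps)
    ultimately show ?thesis by simp
  qed
  then have "\<alpha> = 0 \<or> \<gamma> = 0" using c0 det by (auto simp: algebra_simps)
  then show ?thesis
  proof
    assume a: "\<alpha> = 0"
    then have "\<beta> \<noteq> 0" using det by auto
    then have "\<delta> = 0" using E1 a by auto
    then show ?thesis using a by simp
  next
    assume g: "\<gamma> = 0"
    then have "\<delta> \<noteq> 0" using det by auto
    then have "\<beta> = 0" using E1 g by auto
    then show ?thesis using g by simp
  qed
qed


lemma core_net:
  fixes T S R :: "'a::field set"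
  assumes fT: "finite T" and fS: "finite S" and fR: "finite R"
    and cT: "card T = n" and cS: "card S = n" and cR: "card R = n" and n1: "n \<ge> 1"
    and T0: "0 \<notin> T" and S0: "0 \<notin> S"
    and rel: "\<forall>t\<in>T. \<forall>s\<in>S. \<exists>r\<in>R. t*s*r = -1"
  shows "\<exists>c. c \<noteq> 0 \<and> (\<forall>t\<in>T. t^n = c)"
proof -
  obtain s0 where s0: "s0 \<in> S" using cS n1 by (metis card.empty ex_in_conv not_one_le_zero)
  obtain t0 where t0: "t0 \<in> T" using cT n1 by (metis card.empty ex_in_conv not_one_le_zero)
  have s0z: "s0 \<noteq> 0" using s0 S0 by auto
  have t0z: "t0 \<noteq> 0" using t0 T0 by auto
  define f where "f t = -1/(t*s0)" for t
  have injf: "inj_on f T"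
    by (rule inj_onI) (use T0 s0z in \<open>auto simp: f_def field_simps\<close>)
  have fsub: "f ` T \<subseteq> R"
  proof
    fix x assume "x \<in> f ` T"
    then obtain t where t: "t \<in> T" "x = f t" by auto
    obtain r where "r \<in> R" "t*s0*r = -1" using rel t s0 by blast
    moreover have "t \<noteq> 0" using t T0 by auto
    ultimately have "r = f t" using s0z by (auto simp: f_def field_simps)
    then show "x \<in> R" using t \<open>r \<in> R\<close> by simp
  qed
  have fT_eq: "f ` T = R"
    using card_subset_eq[OF fR fsub] card_image[OF injf] cT cR by simp
  have inv: "t*(s/s0) \<in> T" if t: "t \<in> T" and s: "s \<in> S" for t s
  proof -
    obtain r where r: "r \<in> R" "t*s*r = -1" using rel t s by blast
    then obtain t' where t': "t' \<in> T" "r = f t'" using fT_eq by auto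
    have "t' \<noteq> 0" using t' T0 by auto
    then have "t*s = t'*s0" using r t' s0z by (auto simp: f_def field_simps)
    then have "t' = t*(s/s0)" using s0z by (auto simp: field_simps)
    then show ?thesis using t' by simp
  qed
  define \<Lambda> where "\<Lambda> = (\<lambda>s. s/s0) ` S"
  have injL: "inj_on (\<lambda>s. s/s0) S" by (rule inj_onI) (use s0z in auto)
  have cL: "card \<Lambda> = n" using card_image[OF injL] cS by (simp add: \<Lambda>_def)
  have fL: "finite \<Lambda>" using fS by (simp add: \<Lambda>_def)
  have L0: "0 \<notin> \<Lambda>" using S0 s0z by (auto simp: \<Lambda>_def)
  have gsub: "(\<lambda>l. l*t0) ` \<Lambda> \<subseteq> T"
    proof
    fix x assume "x \<in> (\<lambda>l. l*t0) ` \<Lambda>"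
    then obtain s where "s \<in> S" "x = (s/s0)*t0" by (auto simp: \<Lambda>_def)
    moreover have "t0*(s/s0) \<in> T" using inv t0 \<open>s \<in> S\<close> by blast
    ultimately show "x \<in> T" by (simp add: mult.commute)
  qed
  have injg: "inj_on (\<lambda>l. l*t0) \<Lambda>" by (rule inj_onI) (use t0z in auto)
  have gT: "(\<lambda>l. l*t0) ` \<Lambda> = T"
    using card_subset_eq[OF fT gsub] card_image[OF injg] cT cL by simp
  have closed: "l*m \<in> \<Lambda>" if l: "l \<in> \<Lambda>" and m: "m \<in> \<Lambda>" for l m
  proof -
    have "m*t0 \<in> T" using gT m by auto
    moreover obtain s where s: "s \<in> S" "l = s/s0" using l by (auto simp: \<Lambda>_def)
    ultimately have "(m*t0)*l \<in> T" using inv by auto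
    then obtain k where k: "k \<in> \<Lambda>" "(m*t0)*l = k*t0" using gT by (metis imageE)
    then have "l*m = k" using t0z by (auto simp: field_simps)
    then show ?thesis using k by simp
  qed
  have pw: "l^n = 1" if l: "l \<in> \<Lambda>" for l
  proof -
    have injh: "inj_on (\<lambda>x. l*x) \<Lambda>" by (rule inj_onI) (use l L0 in auto)
    have hsub: "(\<lambda>x. l*x) ` \<Lambda> \<subseteq> \<Lambda>" using closed l by auto
    have heq: "(\<lambda>x. l*x) ` \<Lambda> = \<Lambda>"
      using card_subset_eq[OF fL hsub] card_image[OF injh] by simp
    have "prod (\<lambda>x. x) \<Lambda> = prod (\<lambda>x. x) ((\<lambda>x. l*x) ` \<Lambda>)" using heq by simp
    also have "\<dots> = prod (\<lambda>x. l*x) \<Lambda>" by (simp add: prod.reindex[OF injh])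
    also have "\<dots> = l^n * prod (\<lambda>x. x) \<Lambda>" by (simp add: prod.distrib cL)
    finally have "1 * prod (\<lambda>x. x) \<Lambda> = l^n * prod (\<lambda>x. x) \<Lambda>" by simp
    moreover have "prod (\<lambda>x. x) \<Lambda> \<noteq> 0" using fL L0 by simp
    ultimately show ?thesis by (metis mult_right_cancel)
  qed
  show ?thesis
  proof (intro exI[of _ "t0^n"] conjI ballI)
    show "t0^n \<noteq> 0" using t0z by simp
    fix t assume "t \<in> T"
    then obtain l where "l \<in> \<Lambda>" "t = l*t0" using gT by auto
    then show "t^n = t0^n" using pw by (simp add: power_mult_distrib)
  qed
qed


definition lc :: "'a::field \<Rightarrow> 'a vec3 \<Rightarrow> 'a \<Rightarrow> 'a vec3 \<Rightarrow> 'a vec3" where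
  "lc x u y v = (case u of (u1,u2,u3) \<Rightarrow> case v of (v1,v2,v3) \<Rightarrow> (x*u1+y*v1, x*u2+y*v2, x*u3+y*v3))"

definition cross3 :: "'a::field vec3 \<Rightarrow> 'a vec3 \<Rightarrow> 'a vec3" where
  "cross3 u v = (case u of (u1,u2,u3) \<Rightarrow> case v of (v1,v2,v3) \<Rightarrow> (u2*v3 - u3*v2, u3*v1 - u1*v3, u1*v2 - u2*v1))"

lemmas vdefs = lc_def cross3_def dot3_def smult3_def zero3_def

lemma dot_lc: "dot3 w (lc x u y v) = x * dot3 w u + y * dot3 w v"
  by (cases w rule: prod_cases3, cases u rule: prod_cases3, cases v rule: prod_cases3)
     (simp add: vdefs algebra_simps)

lemma dot_smult: "dot3 w (smult3 k v) = k * dot3 w v"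
  by (cases w rule: prod_cases3, cases v rule: prod_cases3) (simp add: vdefs algebra_simps)

lemma lc_lc: "lc x (lc a u b v) y (lc c u d v) = lc (x*a+y*c) u (x*b+y*d) v"
  by (cases u rule: prod_cases3, cases v rule: prod_cases3) (simp add: vdefs algebra_simps)

lemma smult_lc: "smult3 k (lc x u y v) = lc (k*x) u (k*y) v"
  by (cases u rule: prod_cases3, cases v rule: prod_cases3) (simp add: vdefs algebra_simps)

lemma lc_00: "lc 0 u 0 v = zero3"
  by (cases u rule: prod_cases3, cases v rule: prod_cases3) (simp add: vdefs)

lemma lc_x0: "lc x u 0 v = smult3 x u"
  by (cases u rule: prod_cases3, cases v rule: prod_cases3) (simp add: vdefs)

lemma lc_0y: "lc 0 u y v = smult3 y v"
  by (cases u rule: prod_cases3, cases v rule: prod_cases3) (simp add: vdefs)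

lemma dot_cross1: "dot3 (cross3 u v) u = 0"
  by (cases u rule: prod_cases3, cases v rule: prod_cases3) (simp add: vdefs algebra_simps)
lemma dot_cross2: "dot3 (cross3 u v) v = 0"
  by (cases u rule: prod_cases3, cases v rule: prod_cases3) (simp add: vdefs algebra_simps)
lemma dot_comm: "dot3 u v = dot3 v u"
  by (cases u rule: prod_cases3, cases v rule: prod_cases3) (simp add: vdefs algebra_simps)

lemma decomp:
  "smult3 (dot3 w1 (cross3 w2 w3)) v =
   lc (dot3 w1 v) (cross3 w2 w3) 1 (lc (dot3 w2 v) (cross3 w3 w1) (dot3 w3 v) (cross3 w1 w2))"
  by (cases w1 rule: prod_cases3, cases w2 rule: prod_cases3, cases w3 rule: prod_cases3, cases v rule: prod_cases3)
     (simp add: vdefs algebra_simps)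

lemma dets:
  "dot3 w3 (cross3 w1 w2) = dot3 w1 (cross3 w2 w3)"
  "dot3 w2 (cross3 w3 w1) = dot3 w1 (cross3 w2 w3)"
  "dot3 w1 (cross3 w1 w2) = 0" "dot3 w2 (cross3 w1 w2) = 0"
  "dot3 w3 (cross3 w3 w1) = 0" "dot3 w1 (cross3 w3 w1) = 0"
  "dot3 w2 (cross3 w2 w3) = 0" "dot3 w3 (cross3 w2 w3) = 0"
  by (cases w1 rule: prod_cases3, cases w2 rule: prod_cases3, cases w3 rule: prod_cases3;
      simp add: vdefs algebra_simps)+

lemma triple:
  "dot3 (cross3 (lc 1 (cross3 w1 w2) t (cross3 w3 w1)) (lc 1 (cross3 w2 w3) s (cross3 w1 w2))) (lc 1 (cross3 w3 w1) r (cross3 w2 w3))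
   = (1 + t*s*r) * (dot3 w1 (cross3 w2 w3))^2"
  by (cases w1 rule: prod_cases3, cases w2 rule: prod_cases3, cases w3 rule: prod_cases3)
     (simp add: vdefs algebra_simps power2_eq_square)


lemma mem_ppoint: "x \<in> ppoint v \<longleftrightarrow> (\<exists>k. k \<noteq> 0 \<and> x = smult3 k v)"
  by (auto simp: ppoint_def)

lemma smult_1: "smult3 1 v = v"
  by (cases v rule: prod_cases3) (simp add: vdefs)
lemma smult_smult: "smult3 a (smult3 b v) = smult3 (a*b) v"
  by (cases v rule: prod_cases3) (simp add: vdefs)
lemma smult_zero_iff: "smult3 k v = zero3 \<longleftrightarrow> k = 0 \<or> v = zero3"
  by (cases v rule: prod_cases3) (auto simp: vdefs)

lemma self_ppoint: "v \<in> ppoint v"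
  using smult_1[of v] by (auto simp: mem_ppoint intro!: exI[of _ 1])

lemma ppoint_eqD: "ppoint u = ppoint v \<Longrightarrow> \<exists>k. k \<noteq> 0 \<and> u = smult3 k v"
  using self_ppoint[of u] by (auto simp: mem_ppoint)

lemma ppoint_smult: assumes "k \<noteq> 0" shows "ppoint (smult3 k v) = ppoint v"
proof
  show "ppoint (smult3 k v) \<subseteq> ppoint v"
  proof
    fix x assume "x \<in> ppoint (smult3 k v)"
    then obtain c where "c \<noteq> 0" "x = smult3 (c*k) v" by (auto simp: mem_ppoint smult_smult)
    then show "x \<in> ppoint v" using assms unfolding mem_ppoint by (intro exI[of _ "c*k"]) simp
  qed
  show "ppoint v \<subseteq> ppoint (smult3 k v)"
  proof
    fix x assume "x \<in> ppoint v"
    then obtain c where c: "c \<noteq> 0" "x = smult3 c v" by (auto simp: mem_ppoint)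
    then have "x = smult3 (c/k) (smult3 k v)" using assms by (simp add: smult_smult)
    then show "x \<in> ppoint (smult3 k v)" using c assms unfolding mem_ppoint by (intro exI[of _ "c/k"]) simp
  qed
qed

lemma in_pline_iff: assumes "v \<noteq> zero3" shows "ppoint v \<in> pline w \<longleftrightarrow> dot3 w v = 0"
proof
  assume "ppoint v \<in> pline w"
  then obtain v' where v': "ppoint v = ppoint v'" "dot3 w v' = 0" by (auto simp: pline_def)
  then obtain k where "v = smult3 k v'" using ppoint_eqD by blast
  then show "dot3 w v = 0" using v' by (simp add: dot_smult)
next
  assume "dot3 w v = 0" then show "ppoint v \<in> pline w" using assms unfolding pline_def by blast
qed

lemma pline_elem: "P \<in> pline w \<Longrightarrow> \<exists>v. v \<noteq> zero3 \<and> P = ppoint v \<and> dot3 w v = 0"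
  by (auto simp: pline_def)

lemma PG2_points_elem: "P \<in> PG2_points \<Longrightarrow> \<exists>v. v \<noteq> zero3 \<and> P = ppoint v"
  by (auto simp: PG2_points_def)

lemma cross_zero:
  assumes "u \<noteq> zero3" "cross3 u v = zero3" shows "\<exists>k. v = smult3 k u"
proof -
  obtain u1 u2 u3 where u: "u = (u1,u2,u3)" by (cases u rule: prod_cases3)
  obtain v1 v2 v3 where v: "v = (v1,v2,v3)" by (cases v rule: prod_cases3)
  have e: "u2*v3 = u3*v2" "u3*v1 = u1*v3" "u1*v2 = u2*v1" using assms(2) by (auto simp: u v vdefs)
  have nz: "u1 \<noteq> 0 \<or> u2 \<noteq> 0 \<or> u3 \<noteq> 0" using assms(1) by (auto simp: u vdefs)
  show ?thesis
  proof (cases "u1 \<noteq> 0")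
    case True
    then show ?thesis using e
      by (intro exI[of _ "v1/u1"]) (auto simp: u v vdefs field_simps)
  next
    case F1: False
    show ?thesis
    proof (cases "u2 \<noteq> 0")
      case True
      then show ?thesis using e F1
        by (intro exI[of _ "v2/u2"]) (auto simp: u v vdefs field_simps)
    next
      case False
      then have "u3 \<noteq> 0" using nz F1 by auto
      then show ?thesis using e F1 False
        by (intro exI[of _ "v3/u3"]) (auto simp: u v vdefs field_simps)
    qed
  qed
qed

lemma pline_eq_if_cross0:
  assumes "w \<noteq> zero3" "w' \<noteq> zero3" "cross3 w w' = zero3" shows "pline w = pline w'"
proof -
  obtain k where k: "w' = smult3 k w" using cross_zero assms by blast
  then have "k \<noteq> 0" using assms(2) by (auto simp: smult_zero_iff)
  then show ?thesis using k by (auto simp: pline_def dot_comm[of "smult3 k w"] dot_smult dot_comm[of w])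
qed

lemma lc_nz: "dot3 f p \<noteq> 0 \<Longrightarrow> dot3 f q = 0 \<Longrightarrow> lc 1 p t q \<noteq> zero3"
proof
  assume "dot3 f p \<noteq> 0" "dot3 f q = 0" "lc 1 p t q = zero3"
  moreover have "dot3 f zero3 = 0" by (cases f rule: prod_cases3) (simp add: vdefs)
  ultimately show False using dot_lc[of f 1 p t q] by simp
qed

lemma param_inj:
  assumes "dot3 f p \<noteq> 0" "dot3 f q = 0" "dot3 g p = 0" "dot3 g q = dot3 f p"
    and "ppoint (lc 1 p t q) = ppoint (lc 1 p t' q)"
  shows "t = t'"
proof -
  obtain k where k: "lc 1 p t q = smult3 k (lc 1 p t' q)" using ppoint_eqD assms(5) by blast
  have "dot3 f (lc 1 p t q) = dot3 f (smult3 k (lc 1 p t' q))" using k by simp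
  then have k1: "k = 1" using assms by (simp add: dot_lc dot_smult)
  have "dot3 g (lc 1 p t q) = dot3 g (smult3 k (lc 1 p t' q))" using k by simp
  then show ?thesis using assms k1 by (simp add: dot_lc dot_smult)
qed


lemma dnD:
  assumes "dual_3net G1 G2 G3 n"
  shows "G1 \<subseteq> PG2_points" "G2 \<subseteq> PG2_points" "G3 \<subseteq> PG2_points"
    "finite G1" "finite G2" "finite G3" "card G1 = n" "card G2 = n" "card G3 = n"
    "G1 \<inter> G2 = {}" "G1 \<inter> G3 = {}" "G2 \<inter> G3 = {}"
    "\<And>l. l \<in> PG2_lines \<Longrightarrow> l \<inter> G1 \<noteq> {} \<Longrightarrow> l \<inter> G2 \<noteq> {} \<Longrightarrow> card (l \<inter> G1) = 1 \<and> card (l \<inter> G2) = 1 \<and> card (l \<inter> G3) = 1"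
    "\<And>l. l \<in> PG2_lines \<Longrightarrow> l \<inter> G1 \<noteq> {} \<Longrightarrow> l \<inter> G3 \<noteq> {} \<Longrightarrow> card (l \<inter> G1) = 1 \<and> card (l \<inter> G2) = 1 \<and> card (l \<inter> G3) = 1"
    "\<And>l. l \<in> PG2_lines \<Longrightarrow> l \<inter> G2 \<noteq> {} \<Longrightarrow> l \<inter> G3 \<noteq> {} \<Longrightarrow> card (l \<inter> G1) = 1 \<and> card (l \<inter> G2) = 1 \<and> card (l \<inter> G3) = 1"
  using assms unfolding dual_3net_def Let_def by (simp_all; blast)+

lemma avoid:
  assumes "l \<inter> H \<noteq> {} \<Longrightarrow> card (l \<inter> G) = 1" "G \<subseteq> l" "card G = n" "n \<ge> 4"
  shows "l \<inter> H = {}"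
proof (rule ccontr)
  assume "l \<inter> H \<noteq> {}"
  then have "card (l \<inter> G) = 1" using assms(1) by blast
  moreover have "l \<inter> G = G" using assms(2) by blast
  ultimately show False using assms by simp
qed

lemma span_gen:
  assumes "D \<noteq> 0" "smult3 D v = lc 0 r 1 (lc Y q Z p)"
  shows "v = lc (Z/D) p (Y/D) q"
proof -
  obtain v1 v2 v3 where v: "v = (v1,v2,v3)" by (cases v rule: prod_cases3)
  obtain p1 p2 p3 where p: "p = (p1,p2,p3)" by (cases p rule: prod_cases3)
  obtain q1 q2 q3 where q: "q = (q1,q2,q3)" by (cases q rule: prod_cases3)
  obtain r1 r2 r3 where r: "r = (r1,r2,r3)" by (cases r rule: prod_cases3)
  show ?thesis using assms by (simp add: v p q r vdefs field_simps)
qed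

lemma param_gen:
  assumes "D \<noteq> 0" "smult3 D v = lc 0 r 1 (lc Y q Z p)" "Z \<noteq> 0"
  shows "ppoint v = ppoint (lc 1 p (Y/Z) q)"
proof -
  have "v = smult3 (Z/D) (lc 1 p (Y/Z) q)"
    using span_gen[OF assms(1,2)] assms by (simp add: smult_lc)
  then show ?thesis using assms by (simp add: ppoint_smult)
qed

lemma zero_gen:
  assumes "D \<noteq> 0" "smult3 D v = lc 0 r 1 (lc 0 q 0 p)" shows "v = zero3"
  using span_gen[OF assms] by (simp add: lc_00)


lemma net_struct:
  assumes dn: "dual_3net G1 G2 G3 n" and n4: "n \<ge> 4" and tri: "triangle_of G1 G2 G3 l1 l2 l3"
  shows "\<exists>a b T c0. a \<noteq> zero3 \<and> b \<noteq> zero3 \<and> vertex l1 l2 = ppoint a \<and> vertex l1 l3 = ppoint b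
     \<and> ppoint a \<in> l1 \<and> ppoint b \<in> l1
     \<and> (\<forall>v. v \<noteq> zero3 \<longrightarrow> ppoint v \<in> l1 \<longrightarrow> (\<exists>x y. v = lc x a y b))
     \<and> (\<forall>x y x' y'. lc x a y b = lc x' a y' b \<longrightarrow> x = x' \<and> y = y')
     \<and> G1 = (\<lambda>t. ppoint (lc 1 a t b)) ` T \<and> finite T \<and> card T = n
     \<and> c0 \<noteq> 0 \<and> (\<forall>t\<in>T. t^n = c0)"
proof -
  note D = dnD[OF dn]
  have tr: "triangle l1 l2 l3" and sub: "G1 \<subseteq> l1" "G2 \<subseteq> l2" "G3 \<subseteq> l3"
    using tri by (auto simp: triangle_of_def)
  obtain w1 where w1: "w1 \<noteq> zero3" "l1 = pline w1" using tr by (auto simp: triangle_def PG2_lines_def)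
  obtain w2 where w2: "w2 \<noteq> zero3" "l2 = pline w2" using tr by (auto simp: triangle_def PG2_lines_def)
  obtain w3 where w3: "w3 \<noteq> zero3" "l3 = pline w3" using tr by (auto simp: triangle_def PG2_lines_def)
  have L: "l1 \<in> PG2_lines" "l2 \<in> PG2_lines" "l3 \<in> PG2_lines" using tr by (auto simp: triangle_def)
  have ne: "l1 \<noteq> l2" "l1 \<noteq> l3" "l2 \<noteq> l3" "l1 \<inter> l2 \<inter> l3 = {}" using tr by (auto simp: triangle_def)
  define a where "a = cross3 w1 w2"
  define b where "b = cross3 w3 w1"
  define c where "c = cross3 w2 w3"
  define D where "D = dot3 w1 (cross3 w2 w3)"
  have dd1: "dot3 w3 a = D" unfolding a_def D_def by (rule dets(1))
  have dd2: "dot3 w2 b = D" unfolding b_def D_def by (rule dets(2))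
  have dd3: "dot3 w1 a = 0" "dot3 w2 a = 0" "dot3 w3 b = 0" "dot3 w1 b = 0" "dot3 w2 c = 0" "dot3 w3 c = 0"
    unfolding a_def b_def c_def by (simp_all add: dets(3-8))
  note dd = dd1 dd2 dd3 D_def[symmetric, folded c_def]
  have az: "a \<noteq> zero3" using pline_eq_if_cross0[OF w1(1) w2(1)] ne w1 w2 a_def by auto
  have bz: "b \<noteq> zero3" using pline_eq_if_cross0[OF w3(1) w1(1)] ne w1 w3 b_def by auto
  have cz: "c \<noteq> zero3" using pline_eq_if_cross0[OF w2(1) w3(1)] ne w2 w3 c_def by auto
  have Dz: "D \<noteq> 0"
  proof
    assume "D = 0"
    then have "ppoint a \<in> l1 \<inter> l2 \<inter> l3" using az dd w1 w2 w3 by (simp add: in_pline_iff)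
    then show False using ne by blast
  qed
  have dec1: "smult3 D v = lc (dot3 w1 v) c 1 (lc (dot3 w2 v) b (dot3 w3 v) a)" for v
    using decomp[of w1 w2 w3 v] by (simp add: a_def b_def c_def D_def)
  have dec2: "smult3 D v = lc (dot3 w2 v) b 1 (lc (dot3 w3 v) a (dot3 w1 v) c)" for v
    using decomp[of w2 w3 w1 v] dd2 by (simp add: a_def b_def c_def)
  have dec3: "smult3 D v = lc (dot3 w3 v) a 1 (lc (dot3 w1 v) c (dot3 w2 v) b)" for v
    using decomp[of w3 w1 w2 v] dd1 by (simp add: a_def b_def c_def)
  have nG2: "G2 \<noteq> {}" "G1 \<noteq> {}" "G3 \<noteq> {}" using D(7-9) n4 by auto
  have ne11: "l1 \<inter> G1 \<noteq> {}" using sub(1) nG2(2) by blast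
  have ne22: "l2 \<inter> G2 \<noteq> {}" using sub(2) nG2(1) by blast
  have ne33: "l3 \<inter> G3 \<noteq> {}" using sub(3) nG2(3) by blast
  have av12: "l2 \<inter> G1 = {}"
    by (rule avoid[OF _ sub(2) D(8) n4]) (use D(13)[OF L(2) _ ne22] in blast)
  have av13: "l3 \<inter> G1 = {}"
    by (rule avoid[OF _ sub(3) D(9) n4]) (use D(14)[OF L(3) _ ne33] in blast)
  have av21: "l1 \<inter> G2 = {}"
    by (rule avoid[OF _ sub(1) D(7) n4]) (use D(13)[OF L(1) ne11] in blast)
  have av23: "l3 \<inter> G2 = {}"
    by (rule avoid[OF _ sub(3) D(9) n4]) (use D(15)[OF L(3) _ ne33] in blast)
  have av31: "l1 \<inter> G3 = {}"
    by (rule avoid[OF _ sub(1) D(7) n4]) (use D(14)[OF L(1) ne11] in blast)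
  have av32: "l2 \<inter> G3 = {}"
    by (rule avoid[OF _ sub(2) D(8) n4]) (use D(15)[OF L(2) ne22] in blast)
  have par1: "\<exists>t. g = ppoint (lc 1 a t b)" if g: "g \<in> G1" for g
  proof -
    obtain v where v: "v \<noteq> zero3" "g = ppoint v" "dot3 w1 v = 0"
      using pline_elem g sub w1 by blast
    have "dot3 w3 v \<noteq> 0" using v g av13 w3 in_pline_iff by blast
    then show ?thesis using param_gen[OF Dz _ \<open>dot3 w3 v \<noteq> 0\<close>] dec1[of v] v by auto
  qed
  have par2: "\<exists>s. g = ppoint (lc 1 c s a)" if g: "g \<in> G2" for g
  proof -
    obtain v where v: "v \<noteq> zero3" "g = ppoint v" "dot3 w2 v = 0"
      using pline_elem g sub w2 by blast
    have "dot3 w1 v \<noteq> 0" using v g av21 w1 in_pline_iff by blast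
    then show ?thesis using param_gen[OF Dz _ \<open>dot3 w1 v \<noteq> 0\<close>] dec2[of v] v by auto
  qed
  have par3: "\<exists>r. g = ppoint (lc 1 b r c)" if g: "g \<in> G3" for g
  proof -
    obtain v where v: "v \<noteq> zero3" "g = ppoint v" "dot3 w3 v = 0"
      using pline_elem g sub w3 by blast
    have "dot3 w2 v \<noteq> 0" using v g av32 w2 in_pline_iff by blast
    then show ?thesis using param_gen[OF Dz _ \<open>dot3 w2 v \<noteq> 0\<close>] dec3[of v] v by auto
  qed
  define T where "T = {t. ppoint (lc 1 a t b) \<in> G1}"
  define S where "S = {s. ppoint (lc 1 c s a) \<in> G2}"
  define R where "R = {r. ppoint (lc 1 b r c) \<in> G3}"
  have imT: "G1 = (\<lambda>t. ppoint (lc 1 a t b)) ` T" using par1 by (auto simp: T_def)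
  have imS: "G2 = (\<lambda>s. ppoint (lc 1 c s a)) ` S" using par2 by (auto simp: S_def)
  have imR: "G3 = (\<lambda>r. ppoint (lc 1 b r c)) ` R" using par3 by (auto simp: R_def)
  have injT: "inj_on (\<lambda>t. ppoint (lc 1 a t b)) T"
    by (rule inj_onI) (rule param_inj[of w3 a b w2], use dd Dz in auto)
  have injS: "inj_on (\<lambda>s. ppoint (lc 1 c s a)) S"
    by (rule inj_onI) (rule param_inj[of w1 c a w3], use dd Dz in auto)
  have injR: "inj_on (\<lambda>r. ppoint (lc 1 b r c)) R"
    by (rule inj_onI) (rule param_inj[of w2 b c w1], use dd Dz in auto)
  have fT: "finite T" using D(4) imT injT finite_image_iff by metis
  have fS: "finite S" using D(5) imS injS finite_image_iff by metis
  have fR: "finite R" using D(6) imR injR finite_image_iff by metis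
  have cT: "card T = n" using D(7) imT card_image[OF injT] by simp
  have cS: "card S = n" using D(8) imS card_image[OF injS] by simp
  have cR: "card R = n" using D(9) imR card_image[OF injR] by simp
  have T0: "0 \<notin> T"
  proof
    assume "0 \<in> T"
    then have "ppoint a \<in> G1" by (simp add: T_def lc_x0 smult_1)
    moreover have "ppoint a \<in> l2" using az dd w2 by (simp add: in_pline_iff)
    ultimately show False using av12 by blast
  qed
  have S0: "0 \<notin> S"
  proof
    assume "0 \<in> S"
    then have "ppoint c \<in> G2" by (simp add: S_def lc_x0 smult_1)
    moreover have "ppoint c \<in> l3" using cz dd w3 by (simp add: in_pline_iff)
    ultimately show False using av23 by blast
  qed
  have rel: "\<forall>t\<in>T. \<forall>s\<in>S. \<exists>r\<in>R. t*s*r = -1"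
  proof (intro ballI)
    fix t s assume t: "t \<in> T" and s: "s \<in> S"
    define u where "u = lc 1 a t b"
    define v where "v = lc 1 c s a"
    have uz: "u \<noteq> zero3" unfolding u_def by (rule lc_nz[of w3]) (use dd Dz in auto)
    have vz: "v \<noteq> zero3" unfolding v_def by (rule lc_nz[of w1]) (use dd Dz in auto)
    have g: "ppoint u \<in> G1" using t by (simp add: T_def u_def)
    have h: "ppoint v \<in> G2" using s by (simp add: S_def v_def)
    have crz: "cross3 u v \<noteq> zero3"
    proof
      assume "cross3 u v = zero3"
      then obtain k where k: "v = smult3 k u" using cross_zero uz by blast
      then have "k \<noteq> 0" using vz by (auto simp: smult_zero_iff)
      then have "ppoint v = ppoint u" using k by (simp add: ppoint_smult)
      then have "ppoint u \<in> G1 \<inter> G2" using g h by simp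
      then show False using D(10) by simp
    qed
    define Ln where "Ln = pline (cross3 u v)"
    have LnL: "Ln \<in> PG2_lines" unfolding PG2_lines_def Ln_def using crz by blast
    have "ppoint u \<in> Ln" using uz by (simp add: Ln_def in_pline_iff dot_cross1)
    moreover have "ppoint v \<in> Ln" using vz by (simp add: Ln_def in_pline_iff dot_cross2)
    ultimately have i1: "Ln \<inter> G1 \<noteq> {}" "Ln \<inter> G2 \<noteq> {}" using g h by blast+
    have "card (Ln \<inter> G3) = 1" using D(13)[OF LnL i1] by simp
    then obtain x where "Ln \<inter> G3 = {x}" by (rule card_1_singletonE)
    then have x: "x \<in> Ln" "x \<in> G3" by auto
    obtain r where r: "x = ppoint (lc 1 b r c)" using par3 x by blast
    have rR: "r \<in> R" using x r by (simp add: R_def)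
    have "lc 1 b r c \<noteq> zero3" by (rule lc_nz[of w2]) (use dd Dz in auto)
    then have "dot3 (cross3 u v) (lc 1 b r c) = 0" using x r by (simp add: Ln_def in_pline_iff)
    then have "(1 + t*s*r) * D^2 = 0"
      using triple[of w1 w2 t w3 s r] by (simp add: u_def v_def a_def b_def c_def D_def)
    then have "t*s*r = -1" using Dz by (simp add: add_eq_0_iff)
    then show "\<exists>r\<in>R. t*s*r = -1" using rR by blast
  qed
  obtain c0 where c0: "c0 \<noteq> 0" "\<forall>t\<in>T. t^n = c0"
    using core_net[OF fT fS fR cT cS cR _ T0 S0 rel] n4 by auto
  have a12: "ppoint a \<in> l1 \<inter> l2" using az dd w1 w2 by (simp add: in_pline_iff)
  have b13: "ppoint b \<in> l1 \<inter> l3" using bz dd w1 w3 by (simp add: in_pline_iff)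
  have vA: "vertex l1 l2 = ppoint a"
    unfolding vertex_def
  proof (rule the_equality)
    show "ppoint a \<in> l1 \<inter> l2" by (rule a12)
    fix P assume P: "P \<in> l1 \<inter> l2"
    obtain v where v: "v \<noteq> zero3" "P = ppoint v" "dot3 w1 v = 0" using pline_elem P w1 by blast
    have v2: "dot3 w2 v = 0" using P v w2 in_pline_iff by blast
    have "dot3 w3 v \<noteq> 0"
    proof
      assume "dot3 w3 v = 0"
      then show False using zero_gen[OF Dz] dec1[of v] v v2 by auto
    qed
    then have "ppoint v = ppoint (lc 1 a 0 b)"
      using param_gen[OF Dz _ \<open>dot3 w3 v \<noteq> 0\<close>] dec1[of v] v v2 by simp
    then show "P = ppoint a" using v by (simp add: lc_x0 smult_1)
  qed
  have vB: "vertex l1 l3 = ppoint b"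
    unfolding vertex_def
  proof (rule the_equality)
    show "ppoint b \<in> l1 \<inter> l3" by (rule b13)
    fix P assume P: "P \<in> l1 \<inter> l3"
    obtain v where v: "v \<noteq> zero3" "P = ppoint v" "dot3 w1 v = 0" using pline_elem P w1 by blast
    have v3: "dot3 w3 v = 0" using P v w3 in_pline_iff by blast
    have "dot3 w2 v \<noteq> 0"
    proof
      assume "dot3 w2 v = 0"
      then show False using zero_gen[OF Dz] dec3[of v] v v3 by auto
    qed
    then have "ppoint v = ppoint (lc 1 b 0 c)"
      using param_gen[OF Dz _ \<open>dot3 w2 v \<noteq> 0\<close>] dec3[of v] v v3 by simp
    then show "P = ppoint b" using v by (simp add: lc_x0 smult_1)
  qed
  have span: "\<forall>v. v \<noteq> zero3 \<longrightarrow> ppoint v \<in> l1 \<longrightarrow> (\<exists>x y. v = lc x a y b)"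
  proof (intro allI impI)
    fix v :: "'a vec3" assume "v \<noteq> zero3" "ppoint v \<in> l1"
    then have "dot3 w1 v = 0" using w1 in_pline_iff by blast
    then have "smult3 D v = lc 0 c 1 (lc (dot3 w2 v) b (dot3 w3 v) a)" using dec1[of v] by simp
    then show "\<exists>x y. v = lc x a y b" using span_gen[OF Dz] by blast
  qed
  have ind: "\<forall>x y x' y'. lc x a y b = lc x' a y' b \<longrightarrow> x = x' \<and> y = y'"
  proof (intro allI impI)
    fix x y x' y' assume e: "lc x a y b = lc x' a y' b"
    have "dot3 w3 (lc x a y b) = dot3 w3 (lc x' a y' b)" "dot3 w2 (lc x a y b) = dot3 w2 (lc x' a y' b)"
      using e by simp_all
    then show "x = x' \<and> y = y'" using dd Dz by (simp add: dot_lc)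
  qed
  show ?thesis
    using az bz vA vB a12 b13 span ind imT fT cT c0 by blast
qed


lemma sub_line:
  assumes l: "l \<in> PG2_lines" and l': "l' \<in> PG2_lines"
    and span: "\<forall>v. v \<noteq> zero3 \<longrightarrow> ppoint v \<in> l \<longrightarrow> (\<exists>x y. v = lc x a y b)"
    and ind: "\<forall>x y x' y'. lc x a y b = lc x' a y' b \<longrightarrow> x = x' \<and> y = y'"
    and t12: "t1 \<noteq> t2" and p1: "ppoint (lc 1 a t1 b) \<in> l'" and p2: "ppoint (lc 1 a t2 b) \<in> l'"
  shows "l \<subseteq> l'"
proof
  obtain w' where w': "w' \<noteq> zero3" "l' = pline w'" using l' by (auto simp: PG2_lines_def)
  have nz: "lc 1 a t b \<noteq> zero3" for t
  proof
    assume "lc 1 a t b = zero3"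
    then have "lc 1 a t b = lc 0 a 0 b" by (simp add: lc_00)
    then have "(1::'a) = 0 \<and> t = 0" using ind by (simp only: all_simps(1))
    then show False by simp
  qed
  have "dot3 w' (lc 1 a t1 b) = 0" "dot3 w' (lc 1 a t2 b) = 0"
    using p1 p2 w'(2) in_pline_iff[OF nz] by simp_all
  then have e: "dot3 w' a + t1 * dot3 w' b = 0" "dot3 w' a + t2 * dot3 w' b = 0"
    by (simp_all add: dot_lc)
  moreover have "(t1 - t2) * dot3 w' b = (dot3 w' a + t1 * dot3 w' b) - (dot3 w' a + t2 * dot3 w' b)"
    by (simp add: algebra_simps)
  ultimately have "(t1 - t2) * dot3 w' b = 0" by simp
  then have wb: "dot3 w' b = 0" using t12 by simp
  then have wa: "dot3 w' a = 0" using e by simp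
  fix P assume P: "P \<in> l"
  obtain w where w: "w \<noteq> zero3" "l = pline w" using l by (auto simp: PG2_lines_def)
  obtain v where v: "v \<noteq> zero3" "P = ppoint v" using pline_elem P w by blast
  then obtain x y where "v = lc x a y b" using span[rule_format, OF v(1)] P by auto
  then have "dot3 w' v = 0" using wa wb by (simp add: dot_lc)
  then show "P \<in> l'" using v w'(2) in_pline_iff[OF v(1)] by simp
qed

lemma two_elems: "card T \<ge> 2 \<Longrightarrow> \<exists>t1 t2. t1 \<in> T \<and> t2 \<in> T \<and> t1 \<noteq> t2"
proof (rule ccontr)
  assume c: "card T \<ge> 2" and "\<not> (\<exists>t1 t2. t1 \<in> T \<and> t2 \<in> T \<and> t1 \<noteq> t2)"
  then have "\<forall>a\<in>T. \<forall>b\<in>T. a = b" by blast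
  moreover have "finite T" using c by (metis card.infinite not_numeral_le_zero)
  ultimately have "card T \<le> Suc 0" using card_le_Suc0_iff_eq by blast
  then show False using c by simp
qed

theorem proposition4p8:
  fixes G1 G2 G3 S1 S2 S3 :: "'a::alg_closed_field vec3 set set"
    and l1 l2 l3 m1 m2 m3 :: "'a vec3 set set"
    and n :: nat
  assumes "CHAR('a) = 0 \<or> CHAR('a) > n"
    and "triangular_dual_3net G1 G2 G3 n"
    and "triangular_dual_3net S1 S2 S3 n"
    and "G1 = S1"
    and "triangle_of G1 G2 G3 l1 l2 l3"
    and "triangle_of S1 S2 S3 m1 m2 m3"
  shows "l1 = m1 \<and> {vertex l1 l2, vertex l1 l3} = {vertex m1 m2, vertex m1 m3}"
proof -
  have dn1: "dual_3net G1 G2 G3 n" and n4: "n \<ge> 4" using assms(2) by (auto simp: triangular_dual_3net_def)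
  have dn2: "dual_3net S1 S2 S3 n" using assms(3) by (auto simp: triangular_dual_3net_def)
  obtain a b T c where N1c: "(a \<noteq> zero3) \<and> (b \<noteq> zero3) \<and> (vertex l1 l2 = ppoint a) \<and> (vertex l1 l3 = ppoint b) \<and> (ppoint a \<in> l1) \<and> (ppoint b \<in> l1) \<and> (\<forall>v. v \<noteq> zero3 \<longrightarrow> ppoint v \<in> l1 \<longrightarrow> (\<exists>x y. v = lc x a y b)) \<and> (\<forall>x y x' y'. lc x a y b = lc x' a y' b \<longrightarrow> x = x' \<and> y = y') \<and> (G1 = (\<lambda>t. ppoint (lc 1 a t b)) ` T) \<and> (finite T) \<and> (card T = n) \<and> (c \<noteq> 0) \<and> (\<forall>t\<in>T. t^n = c)"
    using net_struct[OF dn1 n4 assms(5)] by (elim exE) (erule that)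
  note N1 = N1c[THEN conjunct1] N1c[THEN conjunct2, THEN conjunct1] N1c[THEN conjunct2, THEN conjunct2, THEN conjunct1] N1c[THEN conjunct2, THEN conjunct2, THEN conjunct2, THEN conjunct1] N1c[THEN conjunct2, THEN conjunct2, THEN conjunct2, THEN conjunct2, THEN conjunct1] N1c[THEN conjunct2, THEN conjunct2, THEN conjunct2, THEN conjunct2, THEN conjunct2, THEN conjunct1] N1c[THEN conjunct2, THEN conjunct2, THEN conjunct2, THEN conjunct2, THEN conjunct2, THEN conjunct2, THEN conjunct1] N1c[THEN conjunct2, THEN conjunct2, THEN conjunct2, THEN conjunct2, THEN conjunct2, THEN conjunct2, THEN conjunct2, THEN conjunct1] N1c[THEN conjunct2, THEN conjunct2, THEN conjunct2, THEN conjunct2, THEN conjunct2, THEN conjunct2, THEN conjunct2, THEN conjunct2, THEN conjunct1] N1c[THEN conjunct2, THEN conjunct2, THEN conjunct2, THEN conjunct2, THEN conjunct2, THEN conjunct2, THEN conjunct2, THEN conjunct2, THEN conjunct2, THEN conjunct1] N1c[THEN conjunct2, THEN conjunct2, THEN conjunct2, THEN conjunct2, THEN conjunct2, THEN conjunct2, THEN conjunct2, THEN conjunct2, THEN conjunct2, THEN conjunct2, THEN conjunct1] N1c[THEN conjunct2, THEN conjunct2, THEN conjunct2, THEN conjunct2, THEN conjunct2, THEN conjunct2, THEN conjunct2, THEN conjunct2, THEN conjunct2, THEN conjunct2, THEN conjunct2, THEN conjunct1] N1c[THEN conjunct2, THEN conjunct2, THEN conjunct2, THEN conjunct2, THEN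 conjunct2, THEN conjunct2, THEN conjunct2, THEN conjunct2, THEN conjunct2, THEN conjunct2, THEN conjunct2, THEN conjunct2]
  obtain a' b' T' c' where N2c: "(a' \<noteq> zero3) \<and> (b' \<noteq> zero3) \<and> (vertex m1 m2 = ppoint a') \<and> (vertex m1 m3 = ppoint b') \<and> (ppoint a' \<in> m1) \<and> (ppoint b' \<in> m1) \<and> (\<forall>v. v \<noteq> zero3 \<longrightarrow> ppoint v \<in> m1 \<longrightarrow> (\<exists>x y. v = lc x a' y b')) \<and> (\<forall>x y x' y'. lc x a' y b' = lc x' a' y' b' \<longrightarrow> x = x' \<and> y = y') \<and> (S1 = (\<lambda>t. ppoint (lc 1 a' t b')) ` T') \<and> (finite T') \<and> (card T' = n) \<and> (c' \<noteq> 0) \<and> (\<forall>t\<in>T'. t^n = c')"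
    using net_struct[OF dn2 n4 assms(6)] by (elim exE) (erule that)
  note N2 = N2c[THEN conjunct1] N2c[THEN conjunct2, THEN conjunct1] N2c[THEN conjunct2, THEN conjunct2, THEN conjunct1] N2c[THEN conjunct2, THEN conjunct2, THEN conjunct2, THEN conjunct1] N2c[THEN conjunct2, THEN conjunct2, THEN conjunct2, THEN conjunct2, THEN conjunct1] N2c[THEN conjunct2, THEN conjunct2, THEN conjunct2, THEN conjunct2, THEN conjunct2, THEN conjunct1] N2c[THEN conjunct2, THEN conjunct2, THEN conjunct2, THEN conjunct2, THEN conjunct2, THEN conjunct2, THEN conjunct1] N2c[THEN conjunct2, THEN conjunct2, THEN conjunct2, THEN conjunct2, THEN conjunct2, THEN conjunct2, THEN conjunct2, THEN conjunct1] N2c[THEN conjunct2, THEN conjunct2, THEN conjunct2, THEN conjunct2, THEN conjunct2, THEN conjunct2, THEN conjunct2, THEN conjunct2, THEN conjunct1] N2c[THEN conjunct2, THEN conjunct2, THEN conjunct2, THEN conjunct2, THEN conjunct2, THEN conjunct2, THEN conjunct2, THEN conjunct2, THEN conjunct2, THEN conjunct1] N2c[THEN conjunct2, THEN conjunct2, THEN conjunct2, THEN conjunct2, THEN conjunct2, THEN conjunct2, THEN conjunct2, THEN conjunct2, THEN conjunct2, THEN conjunct2, THEN conjunct1] N2c[THEN conjunct2, THEN conjunct2, THEN conjunct2, THEN conjunct2, THEN conjunct2, THEN conjunct2, THEN conjunct2, THEN conjunct2, THEN conjunct2, THEN conjunct2, THEN conjunct2, THEN conjunct1] N2c[THEN conjunct2,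 THEN conjunct2, THEN conjunct2, THEN conjunct2, THEN conjunct2, THEN conjunct2, THEN conjunct2, THEN conjunct2, THEN conjunct2, THEN conjunct2, THEN conjunct2, THEN conjunct2]
  have tri1: "triangle l1 l2 l3" "G1 \<subseteq> l1" using assms(5) by (auto simp: triangle_of_def)
  have tri2: "triangle m1 m2 m3" "S1 \<subseteq> m1" using assms(6) by (auto simp: triangle_of_def)
  have L: "l1 \<in> PG2_lines" "m1 \<in> PG2_lines" using tri1 tri2 by (auto simp: triangle_def)
  obtain t1 t2 where t12: "t1 \<in> T" "t2 \<in> T" "t1 \<noteq> t2" using two_elems[of T] N1(11) n4 by auto
  obtain u1 u2 where u12: "u1 \<in> T'" "u2 \<in> T'" "u1 \<noteq> u2" using two_elems[of T'] N2(11) n4 by auto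
  have "ppoint (lc 1 a t1 b) \<in> G1" "ppoint (lc 1 a t2 b) \<in> G1" using t12 N1(9) by blast+
  then have "ppoint (lc 1 a t1 b) \<in> m1" "ppoint (lc 1 a t2 b) \<in> m1" using tri2 assms(4) by blast+
  then have "l1 \<subseteq> m1"
    by (rule sub_line[OF L(1) L(2) N1(7) N1(8) t12(3)])
  have "ppoint (lc 1 a' u1 b') \<in> S1" "ppoint (lc 1 a' u2 b') \<in> S1" using u12 N2(9) by blast+
  then have "ppoint (lc 1 a' u1 b') \<in> l1" "ppoint (lc 1 a' u2 b') \<in> l1" using tri1 assms(4) by blast+
  then have "m1 \<subseteq> l1"
    by (rule sub_line[OF L(2) L(1) N2(7) N2(8) u12(3)])
  moreover note \<open>l1 \<subseteq> m1\<close>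
  ultimately have lm: "l1 = m1" by blast
  obtain \<alpha> \<beta> where ab: "a' = lc \<alpha> a \<beta> b" using N1(7) N2(1,5) lm by blast
  obtain \<gamma> \<delta> where gd: "b' = lc \<gamma> a \<delta> b" using N1(7) N2(2,6) lm by blast
  have det: "\<alpha>*\<delta> - \<beta>*\<gamma> \<noteq> 0"
  proof
    assume d: "\<alpha>*\<delta> - \<beta>*\<gamma> = 0"
    have "lc \<delta> a' (-\<beta>) b' = lc 0 a' 0 b'"
      using d by (simp add: ab gd lc_lc lc_00 algebra_simps)
    then have "\<delta> = 0 \<and> -\<beta> = 0" using N2(8) by blast
    then have 1: "\<delta> = 0" "\<beta> = 0" by auto
    have "lc \<gamma> a' (-\<alpha>) b' = lc 0 a' 0 b'"
      using d by (simp add: ab gd lc_lc lc_00 algebra_simps)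
    then have "\<gamma> = 0 \<and> -\<alpha> = 0" using N2(8) by blast
    then have 2: "\<gamma> = 0" "\<alpha> = 0" by auto
    show False using N2(1) ab 1 2 by (simp add: lc_00)
  qed
  have eq: "\<forall>t\<in>T'. (\<beta> + t*\<delta>)^n = c*(\<alpha> + t*\<gamma>)^n"
  proof
    fix t' assume t': "t' \<in> T'"
    then have "ppoint (lc 1 a' t' b') \<in> G1" using N2(9) assms(4) by auto
    then obtain t where t: "t \<in> T" "ppoint (lc 1 a' t' b') = ppoint (lc 1 a t b)" using N1(9) by auto
    then obtain k where k: "lc 1 a' t' b' = smult3 k (lc 1 a t b)" using ppoint_eqD by blast
    then have "lc (\<alpha> + t'*\<gamma>) a (\<beta> + t'*\<delta>) b = lc k a (k*t) b"
      by (simp add: ab gd lc_lc smult_lc)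
    then have "\<alpha> + t'*\<gamma> = k" "\<beta> + t'*\<delta> = k*t" using N1(8) by blast+
    then show "(\<beta> + t'*\<delta>)^n = c*(\<alpha> + t'*\<gamma>)^n"
      using N1(13) t by (simp add: power_mult_distrib)
  qed
  have ch: "of_nat m \<noteq> (0::'a)" if "1 \<le> m" "m \<le> n" for m
  proof
    assume "of_nat m = (0::'a)"
    then have "CHAR('a) dvd m" by (simp add: of_nat_eq_0_iff_char_dvd)
    then show False using assms(1) that by (auto dest: dvd_imp_le)
  qed
  have "(\<beta> = 0 \<and> \<gamma> = 0) \<or> (\<alpha> = 0 \<and> \<delta> = 0)"
    by (rule poly_key[OF N2(10) N2(11) _ ch N2(13) eq N1(12) det]) (use n4 in auto)
  then have "{ppoint a, ppoint b} = {ppoint a', ppoint b'}"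
  proof
    assume h: "\<beta> = 0 \<and> \<gamma> = 0"
    have "\<alpha> \<noteq> 0" "\<delta> \<noteq> 0" using det h by auto
    then have "ppoint a' = ppoint a" "ppoint b' = ppoint b"
      using h by (simp_all add: ab gd lc_x0 lc_0y ppoint_smult)
    then show ?thesis by simp
  next
    assume h: "\<alpha> = 0 \<and> \<delta> = 0"
    have "\<beta> \<noteq> 0" "\<gamma> \<noteq> 0" using det h by auto
    then have "ppoint a' = ppoint b" "ppoint b' = ppoint a"
      using h by (simp_all add: ab gd lc_x0 lc_0y ppoint_smult)
    then show ?thesis by auto
  qed
  then show ?thesis using lm N1(3,4) N2(3,4) by simp
qed

end
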